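(* For a set $\Psi\subseteq\mathcal{K}$, let $EE^*_\Psi$ denote the optimal value of problem (P2$_\Psi$) (defined in the context) with $x_k=1$ for $k\in\Psi$ and $x_k=0$ for $k\notin\Psi$, and for each $m\in\mathcal{K}$ let $EE^*_m$ denote the optimal value of the trading-EE problem (T) for MU $m$. Let $m\in\mathcal{K}\setminus\Psi$. Say that serving MU $m$ improves the EE of the SC if $EE^*_{\Psi\cup\{m\}}>EE^*_\Psi$. Then: (1) if constraints C1 and C4 are both removed from (P2), serving MU $m$ improves the EE of the SC if and only if $EE^*_m>EE^*_\Psi$; (2) if constraint C1 is removed from (P2) (C4 kept), serving MU $m$ improves the EE of the SC if $EE^*_m>EE^*_\Psi$; (3) if constraint C4 is removed from (P2) (C1 kept), serving MU $m$ improves the EE of the SC only if $EE^*_m>EE^*_\Psi$.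
   Context: Setting: $\mathcal{K}=\{1,\dots,K\}$ macro users (MUs), $\mathcal{N}=\{1,\dots,N\}$ small-cell users (SUs). Constants: $N_0>0$, $\xi\in(0,1]$, $P_{\rm c}>0$, $P^{SC}_{\max}>0$, $R^{SC}_{\min}\ge0$; for each $k$: $W^k_{MC}>0$, $R^k_{MC}>0$, $h_k>0$, $g_{k,n}>0$ ($n\in\mathcal{N}$); for each $n$: $B^n_{SC}>0$, $g_n>0$. Let $k'\in\arg\max_{n}g_{k,n}$. Let $\rho(b,p,g)=b\log_2(1+\frac{pg}{bN_0})$ ($=0$ if $b=0$). Problem (P2$_\Psi$): with $x_k=\mathbf 1[k\in\Psi]$, maximize over $p_n\ge0$, $p_{k,k'}\ge0$, $b_{k,k'}\ge0$, $q_k\ge0$, $w_k\ge0$ $$\frac{\sum_{n}\rho(B^n_{SC},p_n,g_n)+\sum_{k}x_k\rho(b_{k,k'},p_{k,k'},g_{k,k'})}{\sum_n\frac{p_n}{\xi}+\sum_kx_k\frac{p_{k,k'}}{\xi}+\sum_kx_k\frac{q_k}{\xi}+P_{\rm c}}$$ subject to C1: $\sum_np_n+\sum_kp_{k,k'}+\sum_kq_k\le P^{SC}_{\max}$; C2: $b_{k,k'}+w_k=x_kW^k_{MC}$ for all $k$; C3: $\rho(w_k,q_k,h_k)=x_kR^k_{MC}$ for all $k$; C4: $\sum_n\rho(B^n_{SC},p_n,g_n)+\sum_kx_k\rho(b_{k,k'},p_{k,k'},g_{k,k'})\ge R^{SC}_{\min}$. Problem (T) for MU $m$: maximize over $p_{m,m'}\ge0$,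 $b_{m,m'}\ge0$, $q_m\ge0$, $w_m\ge0$ the ratio $\frac{\rho(b_{m,m'},p_{m,m'},g_{m,m'})}{p_{m,m'}/\xi+q_m/\xi}$ subject to $b_{m,m'}+w_m\le W^m_{MC}$ and $\rho(w_m,q_m,h_m)\ge R^m_{MC}$ (no total power or minimum system rate constraint). *)

theory Defs
  imports Complex_Main "HOL-Library.Extended_Real"
begin

record params =
  nK :: nat
  nN :: nat
  N0 :: real
  xi :: real
  Pc :: real
  Pmax :: real
  Rmin :: real
  Wmc :: "nat \<Rightarrow> real"
  Rmc :: "nat \<Rightarrow> real"
  hh :: "nat \<Rightarrow> real"
  gkn :: "nat \<Rightarrow> nat \<Rightarrow> real"
  Bsc :: "nat \<Rightarrow> real"
  gn :: "nat \<Rightarrow> real"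

definition MUs :: "params \<Rightarrow> nat set" where "MUs S = {1..nK S}"
definition SUs :: "params \<Rightarrow> nat set" where "SUs S = {1..nN S}"

definition rho :: "params \<Rightarrow> real \<Rightarrow> real \<Rightarrow> real \<Rightarrow> real" where
  "rho S b p g = (if b = 0 then 0 else b * log 2 (1 + p * g / (b * N0 S)))"

text \<open>g_{k,k'} with k' an argmax of n \<mapsto> g_{k,n}.\<close>
definition gbest :: "params \<Rightarrow> nat \<Rightarrow> real" where
  "gbest S k = Max (gkn S k ` SUs S)"

definition xsel :: "nat set \<Rightarrow> nat \<Rightarrow> real" where
  "xsel Psi k = (if k \<in> Psi then 1 else 0)"

text \<open>Variables of (P2): p n = p_n, pk k = p_{k,k'}, bk k = b_{k,k'}, qk k = q_k, wk k = w_k.\<close>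
definition rate2 :: "params \<Rightarrow> nat set \<Rightarrow> (nat \<Rightarrow> real) \<Rightarrow> (nat \<Rightarrow> real) \<Rightarrow> (nat \<Rightarrow> real) \<Rightarrow> real" where
  "rate2 S Psi p pk bk =
     (\<Sum>n\<in>SUs S. rho S (Bsc S n) (p n) (gn S n))
     + (\<Sum>k\<in>MUs S. xsel Psi k * rho S (bk k) (pk k) (gbest S k))"

definition power2 :: "params \<Rightarrow> nat set \<Rightarrow> (nat \<Rightarrow> real) \<Rightarrow> (nat \<Rightarrow> real) \<Rightarrow> (nat \<Rightarrow> real) \<Rightarrow> real" where
  "power2 S Psi p pk qk =
     (\<Sum>n\<in>SUs S. p n / xi S) + (\<Sum>k\<in>MUs S. xsel Psi k * (pk k / xi S))
     + (\<Sum>k\<in>MUs S. xsel Psi k * (qk k / xi S)) + Pc S"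

text \<open>Feasible set of (P2_Psi); c1 / c4 indicate whether constraints C1 / C4 are kept.\<close>
definition feasible2 :: "params \<Rightarrow> bool \<Rightarrow> bool \<Rightarrow> nat set \<Rightarrow>
    (nat \<Rightarrow> real) \<Rightarrow> (nat \<Rightarrow> real) \<Rightarrow> (nat \<Rightarrow> real) \<Rightarrow> (nat \<Rightarrow> real) \<Rightarrow> (nat \<Rightarrow> real) \<Rightarrow> bool" where
  "feasible2 S c1 c4 Psi p pk bk qk wk \<longleftrightarrow>
     (\<forall>n\<in>SUs S. p n \<ge> 0) \<and>
     (\<forall>k\<in>MUs S. pk k \<ge> 0 \<and> bk k \<ge> 0 \<and> qk k \<ge> 0 \<and> wk k \<ge> 0) \<and>
     (c1 \<longrightarrow> (\<Sum>n\<in>SUs S. p n) + (\<Sum>k\<in>MUs S. pk k) + (\<Sum>k\<in>MUs S. qk k) \<le> Pmax S) \<and>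
     (\<forall>k\<in>MUs S. bk k + wk k = xsel Psi k * Wmc S k) \<and>
     (\<forall>k\<in>MUs S. rho S (wk k) (qk k) (hh S k) = xsel Psi k * Rmc S k) \<and>
     (c4 \<longrightarrow> rate2 S Psi p pk bk \<ge> Rmin S)"

text \<open>Optimal value EE*_Psi (supremum of the objective over the feasible set;
  -\<infinity> if infeasible).\<close>
definition EE2 :: "params \<Rightarrow> bool \<Rightarrow> bool \<Rightarrow> nat set \<Rightarrow> ereal" where
  "EE2 S c1 c4 Psi = Sup {ereal (rate2 S Psi p pk bk / power2 S Psi p pk qk) | p pk bk qk wk.
      feasible2 S c1 c4 Psi p pk bk qk wk}"

definition EEm :: "params \<Rightarrow> nat \<Rightarrow> ereal" where
  "EEm S m = Sup {ereal (rho S b p (gbest S m) / (p / xi S + q / xi S)) | p b q w.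
      p \<ge> 0 \<and> b \<ge> 0 \<and> q \<ge> 0 \<and> w \<ge> 0 \<and> b + w \<le> Wmc S m \<and> rho S w q (hh S m) \<ge> Rmc S m}"

definition valid_params :: "params \<Rightarrow> bool" where
  "valid_params S \<longleftrightarrow> nN S \<ge> 1 \<and> N0 S > 0 \<and> 0 < xi S \<and> xi S \<le> 1 \<and> Pc S > 0 \<and>
     Pmax S > 0 \<and> Rmin S \<ge> 0 \<and>
     (\<forall>k\<in>MUs S. Wmc S k > 0 \<and> Rmc S k > 0 \<and> hh S k > 0 \<and> (\<forall>n\<in>SUs S. gkn S k n > 0)) \<and>
     (\<forall>n\<in>SUs S. Bsc S n > 0 \<and> gn S n > 0)"

end

theory Submission
  imports Defs
begin


lemma xlnmono:
  fixes a b b' :: real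
  assumes "0 < b" "b \<le> b'" "0 \<le> a"
  shows "b * ln (1 + a / b) \<le> b' * ln (1 + a / b')"
proof (rule DERIV_nonneg_imp_nondecreasing[of b b' "\<lambda>x. x * ln (1 + a / x)"])
  fix x assume x: "b \<le> x" "x \<le> b'"
  have xp: "x > 0" using x assms by linarith
  have pos: "1 + a / x > 0" using xp assms by (simp add: add_pos_nonneg)
  show "\<exists>y. ((\<lambda>x. x * ln (1 + a / x)) has_real_derivative y) (at x) \<and> 0 \<le> y"
  proof (intro exI conjI)
    show "((\<lambda>x. x * ln (1 + a / x)) has_real_derivative
        (1 * ln (1 + a / x) + x * ((- (a / x^2)) / (1 + a / x)))) (at x)"
      using xp pos
      by (auto intro!: derivative_eq_intros simp: power2_eq_square field_simps)
    have e: "x * ((- (a / x^2)) / (1 + a / x)) = - (a / (x + a))"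
    proof -
      have xa: "x + a > 0" using xp assms by linarith
      have "1 + a / x = (x + a) / x" using xp by (simp add: field_simps)
      then show ?thesis using xp xa by (simp add: power2_eq_square)
    qed
    have "ln (1 + a / x) \<ge> a / (x + a)"
    proof -
      have "ln (x / (x + a)) \<le> x / (x + a) - 1"
        using xp assms by (intro ln_le_minus_one) simp
      moreover have "ln (x / (x + a)) = - ln (1 + a / x)"
        using xp assms by (simp add: ln_div field_simps)
      moreover have "x / (x + a) - 1 = - (a / (x + a))"
        using xp assms by (simp add: field_simps)
      ultimately show ?thesis by linarith
    qed
    then show "0 \<le> 1 * ln (1 + a / x) + x * ((- (a / x^2)) / (1 + a / x))"
      using e by simp
  qed
qed (use assms in auto)

lemma rho_nonneg:
  assumes "N0 S > 0" "b \<ge> 0" "p \<ge> 0" "g \<ge> 0"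
  shows "rho S b p g \<ge> 0"
proof -
  have "0 \<le> p * g / (b * N0 S)" using assms by simp
  then have "0 \<le> log 2 (1 + p * g / (b * N0 S))" by simp
  then show ?thesis using assms by (auto simp: rho_def)
qed

lemma rho_mono_b:
  assumes "N0 S > 0" "0 \<le> b" "b \<le> b'" "p \<ge> 0" "g \<ge> 0"
  shows "rho S b p g \<le> rho S b' p g"
proof (cases "b = 0")
  case True
  then show ?thesis using assms rho_nonneg[of S b' p g] by (simp add: rho_def)
next
  case False
  then have bp: "b > 0" using assms by simp
  have "b * ln (1 + (p * g / N0 S) / b) \<le> b' * ln (1 + (p * g / N0 S) / b')"
    by (rule xlnmono) (use bp assms in auto)
  then have "b * ln (1 + p * g / (b * N0 S)) / ln 2 \<le> b' * ln (1 + p * g / (b' * N0 S)) / ln 2"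
    by (simp add: divide_right_mono mult.commute)
  then show ?thesis using bp assms by (simp add: rho_def log_def)
qed

lemma rho_exact:
  assumes "N0 S > 0" "w > 0" "h > 0"
  shows "rho S w ((2 powr (R / w) - 1) * w * N0 S / h) h = R"
proof -
  have "1 + (2 powr (R / w) - 1) * w * N0 S / h * h / (w * N0 S) = 2 powr (R / w)"
    using assms by (simp add: field_simps)
  then show ?thesis using assms by (simp add: rho_def)
qed

lemma q_le:
  assumes "N0 S > 0" "w > 0" "h > 0" "q \<ge> 0" "rho S w q h \<ge> R"
  shows "(2 powr (R / w) - 1) * w * N0 S / h \<le> q"
proof -
  have "w * log 2 (1 + q * h / (w * N0 S)) \<ge> R" using assms by (simp add: rho_def)
  then have "log 2 (1 + q * h / (w * N0 S)) \<ge> R / w" using assms by (simp add: divide_le_eq mult.commute)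
  then have "2 powr (R / w) \<le> 2 powr (log 2 (1 + q * h / (w * N0 S)))" by simp
  also have "\<dots> = 1 + q * h / (w * N0 S)" using assms by (simp add: add_pos_nonneg)
  finally have "2 powr (R / w) - 1 \<le> q * h / (w * N0 S)" by simp
  then have "(2 powr (R / w) - 1) * (w * N0 S) \<le> q * h" using assms by (simp add: le_divide_eq)
  then show ?thesis using assms by (simp add: divide_le_eq algebra_simps)
qed

lemma rho_bound:
  assumes "N0 S > 0" "0 \<le> b" "b \<le> W" "p \<ge> 0" "0 \<le> g" "g \<le> G" "t \<ge> 1"
  shows "rho S b p g \<le> W * ln t / ln 2 + p * G / (N0 S * t * ln 2)"
proof (cases "b = 0")
  case True
  have "0 \<le> W * ln t / ln 2" using assms by simp
  moreover have "0 \<le> p * G / (N0 S * t * ln 2)" using assms by simp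
  ultimately show ?thesis using True by (simp add: rho_def)
next
  case False
  then have bp: "b > 0" using assms by simp
  define y where "y = 1 + p * g / (b * N0 S)"
  have yp: "y > 0" using bp assms by (simp add: y_def add_pos_nonneg)
  have tp: "t > 0" using assms by simp
  have "ln (y / t) \<le> y / t - 1" using yp tp by (intro ln_le_minus_one) simp
  then have l: "ln y \<le> ln t + y / t - 1" using yp tp by (simp add: ln_div)
  have "b * ln y \<le> b * (ln t + y / t - 1)" using l bp by (simp add: mult_left_mono)
  also have "\<dots> = b * ln t + b / t - b + p * g / (N0 S * t)"
    using bp tp assms by (simp add: y_def field_simps)
  also have "\<dots> \<le> W * ln t + p * G / (N0 S * t)"
  proof -
    have "b / t \<le> b" using bp assms by (simp add: divide_le_eq)
    moreover have "b * ln t \<le> W * ln t" using assms by (simp add: mult_right_mono)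
    moreover have "p * g / (N0 S * t) \<le> p * G / (N0 S * t)"
      using assms tp by (simp add: divide_right_mono mult_left_mono)
    ultimately show ?thesis by linarith
  qed
  finally have "b * ln y / ln 2 \<le> (W * ln t + p * G / (N0 S * t)) / ln 2"
    by (simp add: divide_right_mono)
  then show ?thesis using bp by (simp add: rho_def log_def y_def add_divide_distrib mult.commute mult.left_commute)
qed

lemma xsel_ins: "m \<notin> Psi \<Longrightarrow> xsel (insert m Psi) k = xsel Psi k + (if k = m then 1 else 0)"
  by (auto simp: xsel_def)

lemma finite_MUs[simp]: "finite (MUs S)" by (simp add: MUs_def)
lemma finite_SUs[simp]: "finite (SUs S)" by (simp add: SUs_def)

lemma sum_ins:
  assumes "m \<in> MUs S" "m \<notin> Psi"
  shows "(\<Sum>k\<in>MUs S. xsel (insert m Psi) k * f k) = (\<Sum>k\<in>MUs S. xsel Psi k * f k) + f m"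
proof -
  have "(\<Sum>k\<in>MUs S. xsel (insert m Psi) k * f k) = (\<Sum>k\<in>MUs S. xsel Psi k * f k + (if k = m then f k else 0))"
    using assms by (intro sum.cong) (auto simp: xsel_def)
  also have "\<dots> = (\<Sum>k\<in>MUs S. xsel Psi k * f k) + f m"
    using assms by (simp add: sum.distrib)
  finally show ?thesis .
qed

lemma rate2_ins:
  assumes "m \<in> MUs S" "m \<notin> Psi"
  shows "rate2 S (insert m Psi) p pk bk = rate2 S Psi p pk bk + rho S (bk m) (pk m) (gbest S m)"
proof -
  have "(\<Sum>k\<in>MUs S. xsel (insert m Psi) k * rho S (bk k) (pk k) (gbest S k))
      = (\<Sum>k\<in>MUs S. xsel Psi k * rho S (bk k) (pk k) (gbest S k))
        + (\<Sum>k\<in>MUs S. (if k = m then rho S (bk k) (pk k) (gbest S k) else 0))"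
    using assms by (simp add: sum_ins)
  also have "(\<Sum>k\<in>MUs S. (if k = m then rho S (bk k) (pk k) (gbest S k) else 0)) = rho S (bk m) (pk m) (gbest S m)"
    using assms by simp
  finally show ?thesis by (simp add: rate2_def)
qed

lemma power2_ins:
  assumes "m \<in> MUs S" "m \<notin> Psi"
  shows "power2 S (insert m Psi) p pk qk = power2 S Psi p pk qk + (pk m / xi S + qk m / xi S)"
proof -
  have a: "(\<Sum>k\<in>MUs S. xsel (insert m Psi) k * (pk k / xi S))
      = (\<Sum>k\<in>MUs S. xsel Psi k * (pk k / xi S)) + pk m / xi S"
    using assms by (rule sum_ins)
  have b: "(\<Sum>k\<in>MUs S. xsel (insert m Psi) k * (qk k / xi S))
      = (\<Sum>k\<in>MUs S. xsel Psi k * (qk k / xi S)) + qk m / xi S"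
    using assms by (rule sum_ins)
  show ?thesis unfolding power2_def a b by linarith
qed

lemma rate2_upd:
  assumes "m \<notin> Psi"
  shows "rate2 S Psi p (pk(m := x)) (bk(m := y)) = rate2 S Psi p pk bk"
  unfolding rate2_def using assms by (intro arg_cong2[where f="(+)"] refl sum.cong) (auto simp: xsel_def)

lemma power2_upd:
  assumes "m \<notin> Psi"
  shows "power2 S Psi p (pk(m := x)) (qk(m := y)) = power2 S Psi p pk qk"
  unfolding power2_def using assms
  by (intro arg_cong2[where f="(+)"] refl sum.cong) (auto simp: xsel_def)

lemma xsel_nonneg: "xsel Psi k \<ge> 0" by (simp add: xsel_def)

lemma power2_ge:
  assumes "valid_params S" "feasible2 S c1 c4 Psi p pk bk qk wk"
  shows "power2 S Psi p pk qk \<ge> Pc S" "power2 S Psi p pk qk > 0"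
proof -
  have xi: "xi S > 0" using assms by (simp add: valid_params_def)
  have "(\<Sum>n\<in>SUs S. p n / xi S) \<ge> 0" using assms xi by (intro sum_nonneg) (auto simp: feasible2_def)
  moreover have "(\<Sum>k\<in>MUs S. xsel Psi k * (pk k / xi S)) \<ge> 0"
    using assms xi by (intro sum_nonneg) (auto simp: feasible2_def xsel_def)
  moreover have "(\<Sum>k\<in>MUs S. xsel Psi k * (qk k / xi S)) \<ge> 0"
    using assms xi by (intro sum_nonneg) (auto simp: feasible2_def xsel_def)
  ultimately show "power2 S Psi p pk qk \<ge> Pc S" by (simp add: power2_def)
  then show "power2 S Psi p pk qk > 0" using assms by (simp add: valid_params_def)
qed

lemma mediant:
  fixes A B r c :: real
  assumes "B > 0" "c > 0"
  shows "(A + r) / (B + c) \<le> max (A / B) (r / c)"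
proof -
  let ?M = "max (A / B) (r / c)"
  have "A \<le> ?M * B" using assms by (simp add: pos_divide_le_eq[symmetric])
  moreover have "r \<le> ?M * c" using assms by (simp add: pos_divide_le_eq[symmetric])
  ultimately have "A + r \<le> ?M * (B + c)" by (simp add: distrib_left)
  then show ?thesis using assms by (simp add: pos_divide_le_eq)
qed

lemma EE2_upper:
  assumes "feasible2 S c1 c4 Psi p pk bk qk wk"
  shows "ereal (rate2 S Psi p pk bk / power2 S Psi p pk qk) \<le> EE2 S c1 c4 Psi"
  unfolding EE2_def using assms by (intro Sup_upper) blast

lemma EEm_upper:
  assumes "p \<ge> 0" "b \<ge> 0" "q \<ge> 0" "w \<ge> 0" "b + w \<le> Wmc S m" "rho S w q (hh S m) \<ge> Rmc S m"
  shows "ereal (rho S b p (gbest S m) / (p / xi S + q / xi S)) \<le> EEm S m"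
  unfolding EEm_def using assms by (intro Sup_upper) blast

lemma upper:
  assumes vp: "valid_params S" and "Psi \<subseteq> MUs S" and mm: "m \<in> MUs S" "m \<notin> Psi"
  shows "EE2 S c1 False (insert m Psi) \<le> max (EE2 S c1 False Psi) (EEm S m)"
  unfolding EE2_def[of S c1 False "insert m Psi"]
proof (rule Sup_least, clarify)
  fix p pk bk qk wk
  assume f: "feasible2 S c1 False (insert m Psi) p pk bk qk wk"
  have xi: "xi S > 0" and N0: "N0 S > 0" using vp by (auto simp: valid_params_def)
  have Rm: "Rmc S m > 0" using vp mm by (auto simp: valid_params_def)
  have xm: "xsel (insert m Psi) m = 1" by (simp add: xsel_def)
  have fm: "pk m \<ge> 0" "bk m \<ge> 0" "qk m \<ge> 0" "wk m \<ge> 0" "bk m + wk m = Wmc S m"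
      "rho S (wk m) (qk m) (hh S m) = Rmc S m"
    using f mm xm by (auto simp: feasible2_def)
  have "qk m \<noteq> 0"
  proof
    assume "qk m = 0"
    then have "rho S (wk m) (qk m) (hh S m) = 0" by (simp add: rho_def)
    then show False using fm Rm by simp
  qed
  then have cpos: "pk m / xi S + qk m / xi S > 0" using fm xi
    by (simp add: add_nonneg_pos)
  have T: "ereal (rho S (bk m) (pk m) (gbest S m) / (pk m / xi S + qk m / xi S)) \<le> EEm S m"
    using fm by (intro EEm_upper[where w="wk m"]) auto
  let ?bk = "bk(m := 0)" and ?wk = "wk(m := 0)"
  have f2: "feasible2 S c1 False Psi p pk ?bk qk ?wk"
  proof -
    have "\<And>k. k \<noteq> m \<Longrightarrow> xsel (insert m Psi) k = xsel Psi k" by (simp add: xsel_def)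
    moreover have "xsel Psi m = 0" using mm by (simp add: xsel_def)
    ultimately show ?thesis using f by (auto simp: feasible2_def rho_def)
  qed
  have B: "ereal (rate2 S Psi p pk ?bk / power2 S Psi p pk qk) \<le> EE2 S c1 False Psi"
    using EE2_upper[OF f2] .
  have r: "rate2 S Psi p pk ?bk = rate2 S Psi p pk bk"
    using rate2_upd[OF mm(2), of S p pk "pk m" bk 0] by simp
  have Bpos: "power2 S Psi p pk qk > 0" using power2_ge(2)[OF vp f2] .
  have "rate2 S (insert m Psi) p pk bk / power2 S (insert m Psi) p pk qk
      = (rate2 S Psi p pk bk + rho S (bk m) (pk m) (gbest S m)) / (power2 S Psi p pk qk + (pk m / xi S + qk m / xi S))"
    using mm by (simp add: rate2_ins power2_ins)
  also have "\<dots> \<le> max (rate2 S Psi p pk bk / power2 S Psi p pk qk) (rho S (bk m) (pk m) (gbest S m) / (pk m / xi S + qk m / xi S))"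
    by (rule mediant[OF Bpos cpos])
  finally have "ereal (rate2 S (insert m Psi) p pk bk / power2 S (insert m Psi) p pk qk)
     \<le> max (ereal (rate2 S Psi p pk bk / power2 S Psi p pk qk)) (ereal (rho S (bk m) (pk m) (gbest S m) / (pk m / xi S + qk m / xi S)))"
    by (auto simp: max_def split: if_splits)
  also have "\<dots> \<le> max (EE2 S c1 False Psi) (EEm S m)"
    using B T r by (intro max.mono) auto
  finally show "ereal (rate2 S (insert m Psi) p pk bk / power2 S (insert m Psi) p pk qk) \<le> max (EE2 S c1 False Psi) (EEm S m)" .
qed

lemma one_SUs: "valid_params S \<Longrightarrow> 1 \<in> SUs S"
  by (simp add: valid_params_def SUs_def)

lemma gbest_pos: "valid_params S \<Longrightarrow> k \<in> MUs S \<Longrightarrow> gbest S k > 0"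
proof -
  assume vp: "valid_params S" and k: "k \<in> MUs S"
  have "gkn S k 1 \<le> gbest S k" unfolding gbest_def using one_SUs[OF vp] by (intro Max_ge) auto
  moreover have "gkn S k 1 > 0" using vp k one_SUs[OF vp] by (auto simp: valid_params_def)
  ultimately show ?thesis by simp
qed

definition Kc :: "params \<Rightarrow> real" where
  "Kc S = (\<Sum>n\<in>SUs S. Bsc S n) + (\<Sum>k\<in>MUs S. Wmc S k)"
definition Gc :: "params \<Rightarrow> real" where
  "Gc S = (\<Sum>n\<in>SUs S. gn S n) + (\<Sum>k\<in>MUs S. gbest S k)"

lemma Gc_ge:
  assumes vp: "valid_params S"
  shows "\<And>n. n \<in> SUs S \<Longrightarrow> gn S n \<le> Gc S" "\<And>k. k \<in> MUs S \<Longrightarrow> gbest S k \<le> Gc S" "Gc S \<ge> 0"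
proof -
  have a: "(\<Sum>n\<in>SUs S. gn S n) \<ge> 0" using vp by (intro sum_nonneg) (auto simp: valid_params_def)
  have b: "(\<Sum>k\<in>MUs S. gbest S k) \<ge> 0" using vp gbest_pos by (intro sum_nonneg) (auto intro: less_imp_le)
  show "Gc S \<ge> 0" using a b by (simp add: Gc_def)
  fix n assume "n \<in> SUs S"
  then have "gn S n \<le> (\<Sum>n\<in>SUs S. gn S n)" using vp by (intro member_le_sum) (auto simp: valid_params_def)
  then show "gn S n \<le> Gc S" using b by (simp add: Gc_def)
next
  have a: "(\<Sum>n\<in>SUs S. gn S n) \<ge> 0" using vp by (intro sum_nonneg) (auto simp: valid_params_def)
  fix k assume "k \<in> MUs S"
  then have "gbest S k \<le> (\<Sum>k\<in>MUs S. gbest S k)" using vp gbest_pos by (intro member_le_sum) (auto intro: less_imp_le)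
  then show "gbest S k \<le> Gc S" using a by (simp add: Gc_def)
qed

lemma rate_bound:
  assumes vp: "valid_params S" and f: "feasible2 S c1 c4 Psi p pk bk qk wk" and t: "t \<ge> 1"
  shows "rate2 S Psi p pk bk \<le> Kc S * ln t / ln 2 + (Gc S * xi S / (N0 S * ln 2)) / t * power2 S Psi p pk qk"
proof -
  have xi: "xi S > 0" and N0: "N0 S > 0" using vp by (auto simp: valid_params_def)
  define D where "D = N0 S * t * ln 2"
  have Dp: "D > 0" using N0 t by (simp add: D_def)
  have G0: "Gc S \<ge> 0" using Gc_ge[OF vp] by simp
  have 1: "rho S (Bsc S n) (p n) (gn S n) \<le> Bsc S n * ln t / ln 2 + p n * Gc S / D" if n: "n \<in> SUs S" for n
    unfolding D_def using n vp f t Gc_ge[OF vp]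
    by (intro rho_bound) (auto simp: valid_params_def feasible2_def intro: less_imp_le)
  have 2: "xsel Psi k * rho S (bk k) (pk k) (gbest S k) \<le> Wmc S k * ln t / ln 2 + xsel Psi k * (pk k * Gc S / D)"
    if k: "k \<in> MUs S" for k
  proof (cases "k \<in> Psi")
    case True
    have "rho S (bk k) (pk k) (gbest S k) \<le> Wmc S k * ln t / ln 2 + pk k * Gc S / D"
      unfolding D_def using True k vp f t Gc_ge[OF vp] gbest_pos[OF vp k]
      by (intro rho_bound) (auto simp: valid_params_def feasible2_def xsel_def intro: less_imp_le
          dest!: bspec[where x=k])
    then show ?thesis using True by (simp add: xsel_def)
  next
    case False
    have "Wmc S k * ln t / ln 2 \<ge> 0" using k vp t by (auto simp: valid_params_def)
    then show ?thesis using False by (simp add: xsel_def)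
  qed
  have "rate2 S Psi p pk bk \<le> (\<Sum>n\<in>SUs S. Bsc S n * ln t / ln 2 + p n * Gc S / D)
       + (\<Sum>k\<in>MUs S. Wmc S k * ln t / ln 2 + xsel Psi k * (pk k * Gc S / D))"
    unfolding rate2_def using 1 2 by (intro add_mono sum_mono) auto
  also have "\<dots> = Kc S * ln t / ln 2 + ((\<Sum>n\<in>SUs S. p n) + (\<Sum>k\<in>MUs S. xsel Psi k * pk k)) * (Gc S / D)"
    by (simp add: Kc_def sum.distrib sum_divide_distrib[symmetric] sum_distrib_right sum_distrib_left add_divide_distrib algebra_simps)
  also have "\<dots> \<le> Kc S * ln t / ln 2 + (xi S * power2 S Psi p pk qk) * (Gc S / D)"
  proof -
    have "(\<Sum>k\<in>MUs S. xsel Psi k * qk k) \<ge> 0" using f by (intro sum_nonneg) (auto simp: feasible2_def xsel_def)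
    moreover have "xi S * power2 S Psi p pk qk = (\<Sum>n\<in>SUs S. p n) + (\<Sum>k\<in>MUs S. xsel Psi k * pk k)
         + (\<Sum>k\<in>MUs S. xsel Psi k * qk k) + xi S * Pc S"
    proof -
      have e1: "(\<Sum>k\<in>MUs S. xsel Psi k * (pk k / xi S)) = (\<Sum>k\<in>MUs S. xsel Psi k * pk k) / xi S"
        by (simp add: sum_divide_distrib)
      have e2: "(\<Sum>k\<in>MUs S. xsel Psi k * (qk k / xi S)) = (\<Sum>k\<in>MUs S. xsel Psi k * qk k) / xi S"
        by (simp add: sum_divide_distrib)
      have e3: "(\<Sum>n\<in>SUs S. p n / xi S) = (\<Sum>n\<in>SUs S. p n) / xi S"
        by (simp add: sum_divide_distrib)
      show ?thesis unfolding power2_def e1 e2 e3 using xi by (simp add: field_simps)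
    qed
    moreover have "xi S * Pc S \<ge> 0" using xi vp by (simp add: valid_params_def)
    ultimately have "(\<Sum>n\<in>SUs S. p n) + (\<Sum>k\<in>MUs S. xsel Psi k * pk k) \<le> xi S * power2 S Psi p pk qk" by linarith
    moreover have "Gc S / D \<ge> 0" using G0 Dp by simp
    ultimately show ?thesis by (intro add_left_mono mult_right_mono)
  qed
  also have "\<dots> = Kc S * ln t / ln 2 + (Gc S * xi S / (N0 S * ln 2)) / t * power2 S Psi p pk qk"
    by (simp add: D_def field_simps)
  finally show ?thesis .
qed

lemma key:
  fixes Q :: "real \<Rightarrow> real \<Rightarrow> bool"
  assumes e: "e > 0" and d: "\<delta> > 0" and C: "C \<ge> 0"
    and sup: "\<And>e'. e' < e \<Longrightarrow> \<exists>A B. Q A B \<and> e' < A / B"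
    and pos: "\<And>A B. Q A B \<Longrightarrow> B > 0"
    and bd: "\<And>A B. Q A B \<Longrightarrow> A \<le> C + (e/2) * B"
  shows "\<exists>A B. Q A B \<and> A - e * B > - \<delta>"
proof -
  define \<eta> where "\<eta> = min (e/4) (\<delta> * e / (4 * C + 1))"
  have \<eta>p: "\<eta> > 0" using e d C by (simp add: \<eta>_def)
  obtain A B where Q: "Q A B" and r: "e - \<eta> < A / B" using sup[of "e - \<eta>"] \<eta>p by auto
  have Bp: "B > 0" using pos Q .
  have A1: "(e - \<eta>) * B < A" using r Bp by (simp add: pos_less_divide_eq)
  have A2: "A \<le> C + (e/2) * B" using bd Q .
  have "\<eta> \<le> e/4" unfolding \<eta>_def by (rule min.cobounded1)
  then have "(e/4) * B \<le> (e/2 - \<eta>) * B" using Bp by (intro mult_right_mono) auto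
  also have "(e/2 - \<eta>) * B < C" using A1 A2 by (simp add: algebra_simps)
  finally have eB: "e * B < 4 * C" by simp
  have "\<eta> * B \<le> (\<delta> * e / (4 * C + 1)) * B" using Bp by (intro mult_right_mono) (auto simp: \<eta>_def)
  also have "\<dots> = \<delta> * (e * B) / (4 * C + 1)" by simp
  also have "\<dots> < \<delta>"
  proof -
    have "\<delta> * (e * B) < \<delta> * (4 * C + 1)" using eB d by (intro mult_strict_left_mono) auto
    then show ?thesis using C by (simp add: divide_less_eq)
  qed
  finally have "\<eta> * B < \<delta>" .
  then have "A - e * B > - \<delta>" using A1 by (simp add: algebra_simps)
  then show ?thesis using Q by blast
qed

lemma exists_point:
  assumes vp: "valid_params S"
  shows "\<exists>p pk bk qk wk. feasible2 S False c4 Psi p pk bk qk wk \<and> rate2 S Psi p pk bk > 0"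
proof -
  have N0: "N0 S > 0" using vp by (simp add: valid_params_def)
  have B1: "Bsc S 1 > 0" "gn S 1 > 0" using vp one_SUs[OF vp] by (auto simp: valid_params_def)
  define P0 where "P0 = (2 powr ((Rmin S + 1) / Bsc S 1) - 1) * Bsc S 1 * N0 S / gn S 1"
  have R0: "Rmin S \<ge> 0" using vp by (simp add: valid_params_def)
  have "2 powr ((Rmin S + 1) / Bsc S 1) > 1" using R0 B1 by (simp add: powr_gt_zero)
  then have P0p: "P0 > 0" using B1 N0 by (simp add: P0_def)
  define qs where "qs = (\<lambda>k. if k \<in> Psi then (2 powr (Rmc S k / Wmc S k) - 1) * Wmc S k * N0 S / hh S k else 0)"
  define ws where "ws = (\<lambda>k. if k \<in> Psi then Wmc S k else (0::real))"
  let ?p = "\<lambda>n::nat. P0" and ?z = "\<lambda>k::nat. (0::real)"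
  have rate_eq: "rate2 S Psi ?p ?z ?z = (\<Sum>n\<in>SUs S. rho S (Bsc S n) P0 (gn S n))"
    by (simp add: rate2_def rho_def)
  have "rho S (Bsc S 1) P0 (gn S 1) = Rmin S + 1"
    unfolding P0_def using rho_exact[OF N0 B1(1) B1(2)] .
  moreover have "rho S (Bsc S 1) P0 (gn S 1) \<le> (\<Sum>n\<in>SUs S. rho S (Bsc S n) P0 (gn S n))"
    using vp one_SUs[OF vp] P0p N0
    by (intro member_le_sum rho_nonneg) (auto simp: valid_params_def intro: less_imp_le)
  ultimately have rate: "rate2 S Psi ?p ?z ?z \<ge> Rmin S + 1" using rate_eq by simp
  have kfacts: "0 \<le> qs k \<and> 0 \<le> ws k \<and> 0 + ws k = xsel Psi k * Wmc S k \<and>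
      rho S (ws k) (qs k) (hh S k) = xsel Psi k * Rmc S k" if k: "k \<in> MUs S" for k
  proof -
    have par: "Wmc S k > 0" "Rmc S k > 0" "hh S k > 0" using vp k by (auto simp: valid_params_def)
    have "2 powr (Rmc S k / Wmc S k) \<ge> 1" using par by (intro ge_one_powr_ge_zero) auto
    then have "0 \<le> qs k" using par N0 by (simp add: qs_def)
    moreover have "rho S (ws k) (qs k) (hh S k) = xsel Psi k * Rmc S k"
      using rho_exact[OF N0 par(1) par(3), of "Rmc S k"]
      by (cases "k \<in> Psi") (simp_all add: ws_def qs_def xsel_def rho_def)
    ultimately show ?thesis using par by (simp add: ws_def xsel_def)
  qed
  have feas: "feasible2 S False c4 Psi ?p ?z ?z qs ws"
  proof -
    have "0 \<le> P0" "(0::real) \<le> 0" "Rmin S \<le> rate2 S Psi ?p ?z ?z" using P0p rate by auto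
    then show ?thesis unfolding feasible2_def using kfacts by blast
  qed
  moreover have "rate2 S Psi ?p ?z ?z > 0" using rate R0 by simp
  ultimately show ?thesis by blast
qed

lemma lower:
  assumes vp: "valid_params S" and mm: "m \<in> MUs S" "m \<notin> Psi"
    and lt: "EE2 S False c4 Psi < EEm S m"
  shows "EE2 S False c4 Psi < EE2 S False c4 (insert m Psi)"
proof -
  have xi: "xi S > 0" and N0: "N0 S > 0" using vp by (auto simp: valid_params_def)
  have par: "Wmc S m > 0" "Rmc S m > 0" "hh S m > 0" using vp mm by (auto simp: valid_params_def)
  have g0: "gbest S m \<ge> 0" using gbest_pos[OF vp mm(1)] by simp
  obtain p0 pk0 bk0 qk0 wk0 where f0: "feasible2 S False c4 Psi p0 pk0 bk0 qk0 wk0"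
    and r0: "rate2 S Psi p0 pk0 bk0 > 0"
    using exists_point[OF vp] by blast
  have "0 < ereal (rate2 S Psi p0 pk0 bk0 / power2 S Psi p0 pk0 qk0)"
    using r0 power2_ge(2)[OF vp f0] by simp
  also have "\<dots> \<le> EE2 S False c4 Psi" by (rule EE2_upper[OF f0])
  finally have Epos: "0 < EE2 S False c4 Psi" .
  have "EE2 S False c4 Psi \<noteq> \<infinity>" using lt by auto
  then obtain e where eE: "EE2 S False c4 Psi = ereal e" and e: "e > 0"
    using Epos by (cases "EE2 S False c4 Psi") auto
  from lt[unfolded EEm_def less_Sup_iff] obtain p b q w where
    T: "p \<ge> 0" "b \<ge> 0" "q \<ge> 0" "w \<ge> 0" "b + w \<le> Wmc S m" "rho S w q (hh S m) \<ge> Rmc S m"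
    and Tr: "EE2 S False c4 Psi < ereal (rho S b p (gbest S m) / (p / xi S + q / xi S))"
    by blast
  have Tr': "e < rho S b p (gbest S m) / (p / xi S + q / xi S)" using Tr eE by simp
  have wp: "w > 0"
  proof (rule ccontr)
    assume "\<not> w > 0" then have "w = 0" using T by simp
    then show False using T par by (simp add: rho_def)
  qed
  define q' where "q' = (2 powr (Rmc S m / w) - 1) * w * N0 S / hh S m"
  have q'q: "q' \<le> q" unfolding q'_def using q_le[OF N0 wp par(3) T(3) T(6)] .
  have "2 powr (Rmc S m / w) > 1" using par wp by simp
  then have q'p: "q' > 0" using wp N0 par by (simp add: q'_def)
  have rhoq': "rho S w q' (hh S m) = Rmc S m" unfolding q'_def by (rule rho_exact[OF N0 wp par(3)])
  define b' where "b' = Wmc S m - w"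
  have bb': "b \<le> b'" using T by (simp add: b'_def)
  define r where "r = rho S b' p (gbest S m)"
  define c where "c = p / xi S + q' / xi S"
  have rr: "rho S b p (gbest S m) \<le> r" unfolding r_def using N0 T bb' g0 by (intro rho_mono_b) auto
  have cp: "c > 0" using q'p xi T by (simp add: c_def add_nonneg_pos)
  have cc: "c \<le> p / xi S + q / xi S" using q'q xi by (simp add: c_def divide_right_mono)
  have "e * c \<le> e * (p / xi S + q / xi S)" using cc e by simp
  also have "\<dots> < rho S b p (gbest S m)" using Tr' cp cc by (simp add: pos_less_divide_eq)
  also have "\<dots> \<le> r" by (rule rr)
  finally have ec: "e * c < r" .
  define \<delta> where "\<delta> = r - e * c"
  have dp: "\<delta> > 0" using ec by (simp add: \<delta>_def)
  define M where "M = Gc S * xi S / (N0 S * ln 2)"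
  have M0: "M \<ge> 0" using Gc_ge(3)[OF vp] xi N0 by (simp add: M_def)
  define t where "t = max 1 (2 * M / e)"
  have t1: "t \<ge> 1" by (simp add: t_def)
  have Mt: "M / t \<le> e / 2"
  proof -
    have "2 * M / e \<le> t" by (simp add: t_def)
    then have "2 * M \<le> t * e" using e by (simp add: divide_le_eq)
    then show ?thesis using t1 by (simp add: divide_le_eq mult.commute)
  qed
  define C where "C = Kc S * ln t / ln 2"
  have C0: "C \<ge> 0"
  proof -
    have "(\<Sum>n\<in>SUs S. Bsc S n) \<ge> 0" using vp by (intro sum_nonneg) (auto simp: valid_params_def intro: less_imp_le)
    moreover have "(\<Sum>k\<in>MUs S. Wmc S k) \<ge> 0" using vp by (intro sum_nonneg) (auto simp: valid_params_def intro: less_imp_le)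
    ultimately have "Kc S \<ge> 0" by (simp add: Kc_def)
    then show ?thesis using t1 by (simp add: C_def)
  qed
  define Q where "Q = (\<lambda>A B. \<exists>p pk bk qk wk. feasible2 S False c4 Psi p pk bk qk wk \<and>
      A = rate2 S Psi p pk bk \<and> B = power2 S Psi p pk qk)"
  have "\<exists>A B. Q A B \<and> A - e * B > - \<delta>"
  proof (rule key[OF e dp C0])
    fix e' :: real assume "e' < e"
    then have "ereal e' < EE2 S False c4 Psi" using eE by simp
    from this[unfolded EE2_def less_Sup_iff] obtain p pk bk qk wk where
      ff: "feasible2 S False c4 Psi p pk bk qk wk" and lt': "ereal e' < ereal (rate2 S Psi p pk bk / power2 S Psi p pk qk)"
      by blast
    have "Q (rate2 S Psi p pk bk) (power2 S Psi p pk qk)"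
      unfolding Q_def by (intro exI conjI, rule ff, rule refl, rule refl)
    then have "Q (rate2 S Psi p pk bk) (power2 S Psi p pk qk) \<and> e' < rate2 S Psi p pk bk / power2 S Psi p pk qk"
      using lt' by simp
    then show "\<exists>A B. Q A B \<and> e' < A / B" by blast
  next
    fix A B assume "Q A B"
    then obtain p pk bk qk wk where f: "feasible2 S False c4 Psi p pk bk qk wk"
      and AB: "A = rate2 S Psi p pk bk" "B = power2 S Psi p pk qk" unfolding Q_def by blast
    show "B > 0" using power2_ge(2)[OF vp f] AB by simp
    have "A \<le> C + M / t * B" using rate_bound[OF vp f t1] AB by (simp add: C_def M_def)
    also have "M / t * B \<le> e / 2 * B" using Mt power2_ge(2)[OF vp f] AB by (intro mult_right_mono) auto
    finally show "A \<le> C + e / 2 * B" by simp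
  qed
  then obtain A B where Q: "Q A B" and AB: "A - e * B > - \<delta>" by blast
  then obtain p1 pk1 bk1 qk1 wk1 where f1: "feasible2 S False c4 Psi p1 pk1 bk1 qk1 wk1"
    and A: "A = rate2 S Psi p1 pk1 bk1" and B: "B = power2 S Psi p1 pk1 qk1" unfolding Q_def by blast
  define pk2 where "pk2 = pk1(m := p)"
  define bk2 where "bk2 = bk1(m := b')"
  define qk2 where "qk2 = qk1(m := q')"
  define wk2 where "wk2 = wk1(m := w)"
  have rate_new: "rate2 S (insert m Psi) p1 pk2 bk2 = A + r"
    using mm by (simp add: rate2_ins rate2_upd pk2_def bk2_def A r_def)
  have pow_new: "power2 S (insert m Psi) p1 pk2 qk2 = B + c"
    using mm by (simp add: power2_ins power2_upd pk2_def qk2_def B c_def)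
  have r0': "r \<ge> 0" unfolding r_def using N0 T g0 bb' by (intro rho_nonneg) auto
  have Rmin_ok: "c4 \<longrightarrow> rate2 S (insert m Psi) p1 pk2 bk2 \<ge> Rmin S"
    using f1 r0' rate_new A by (auto simp: feasible2_def)
  have xsk: "\<And>k. k \<noteq> m \<Longrightarrow> xsel (insert m Psi) k = xsel Psi k" by (simp add: xsel_def)
  have xm: "xsel (insert m Psi) m = 1" by (simp add: xsel_def)
  have b'w: "b' + w = Wmc S m" by (simp add: b'_def)
  have b'0: "b' \<ge> 0" using bb' T by simp
  have f2: "feasible2 S False c4 (insert m Psi) p1 pk2 bk2 qk2 wk2"
    using f1 Rmin_ok xsk xm b'w b'0 T wp q'p rhoq'
    unfolding feasible2_def pk2_def bk2_def qk2_def wk2_def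
    by (auto simp del: fun_upd_apply simp: fun_upd_apply[of _ m])
  have Bp: "B > 0" using power2_ge(2)[OF vp f1] B by simp
  have "e * (B + c) < A + r" using AB by (simp add: \<delta>_def algebra_simps)
  then have "e < (A + r) / (B + c)" using Bp cp by (simp add: pos_less_divide_eq)
  then have "ereal e < ereal (rate2 S (insert m Psi) p1 pk2 bk2 / power2 S (insert m Psi) p1 pk2 qk2)"
    using rate_new pow_new by simp
  also have "\<dots> \<le> EE2 S False c4 (insert m Psi)" by (rule EE2_upper[OF f2])
  finally show ?thesis using eE by simp
qed


theorem theorem4:
  fixes S :: params and Psi :: "nat set" and m :: nat
  assumes "valid_params S"
    and "Psi \<subseteq> MUs S"
    and "m \<in> MUs S - Psi"
  shows "(EE2 S False False (insert m Psi) > EE2 S False False Psi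
            \<longleftrightarrow> EEm S m > EE2 S False False Psi)
       \<and> (EEm S m > EE2 S False True Psi
            \<longrightarrow> EE2 S False True (insert m Psi) > EE2 S False True Psi)
       \<and> (EE2 S True False (insert m Psi) > EE2 S True False Psi
            \<longrightarrow> EEm S m > EE2 S True False Psi)"
proof -
  have mm: "m \<in> MUs S" "m \<notin> Psi" using assms(3) by auto
  have up: "EE2 S c1 False (insert m Psi) > EE2 S c1 False Psi \<Longrightarrow> EEm S m > EE2 S c1 False Psi" for c1
  proof -
    assume a: "EE2 S c1 False (insert m Psi) > EE2 S c1 False Psi"
    have "EE2 S c1 False (insert m Psi) \<le> max (EE2 S c1 False Psi) (EEm S m)"
      by (rule upper[OF assms(1) assms(2) mm])
    then show ?thesis using a by (auto simp: max_def split: if_splits)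
  qed
  show ?thesis using up lower[OF assms(1) mm] by blast
qed

end
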